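(* Define $E_{0,n}(x)=1$ for all $n\ge0$, $E_{1,n}(x)=1+x$ for all $n\ge1$, and for $2\le k\le n$, $E_{k,n}(x)=\widetilde{E}^{\mathbf{s}}_{k-1}(x)$ with $\mathbf{s}=(n-k+2,\dots,n)$. Then for all $1\le k\le n$, \[E_{k,n}(x)=E_{k-1,n-1}(x)+x\sum_{j=0}^{k-1}\binom{n-1}{j}A_j(x)\,E_{k-1-j,n-1-j}(x).\]
   Context: For $\mathbf{s}=(s_1,\dots,s_m)\in\mathbb{Z}_{>0}^m$ let $\mathcal{I}^{\mathbf{s}}_m=\{\mathbf{e}\in\mathbb{Z}^m:0\le e_i<s_i\}$, with $e_0=e_{m+1}=0$, $s_0=s_{m+1}=1$; $i\in\{0,\dots,m\}$ is an ascent if $e_i/s_i<e_{i+1}/s_{i+1}$ and a collision if $e_i/s_i=e_{i+1}/s_{i+1}$; $\widetilde{E}^{\mathbf{s}}_m(x)=\sum_{\mathbf{e}\in\mathcal{I}^{\mathbf{s}}_m}(1+x)^{\mathrm{col}(\mathbf{e})}x^{\mathrm{asc}(\mathbf{e})}$. Eulerian polynomials: $A_0(x)=1$, $A_n(x)=\sum_{\sigma\in\mathfrak{S}_n}x^{\mathrm{des}(\sigma)}$ for $n\ge1$, $\mathrm{des}(\sigma)=|\{i\in[n-1]:\sigma_i>\sigma_{i+1}\}|$. *)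

theory Defs
  imports "HOL-Computational_Algebra.Polynomial" "HOL-Combinatorics.Permutations"
begin

definition inv_seqs :: "nat list \<Rightarrow> nat list set" where
  "inv_seqs s = {e. length e = length s \<and> (\<forall>i<length s. e ! i < s ! i)}"

text \<open>Padded versions: e_0 = e_{m+1} = 0 and s_0 = s_{m+1} = 1; position i of the padded
  list is index i (0..m+1).\<close>
definition pad_e :: "nat list \<Rightarrow> nat list" where
  "pad_e e = [0] @ e @ [0]"

definition pad_s :: "nat list \<Rightarrow> nat list" where
  "pad_s s = [1] @ s @ [1]"

definition ratio :: "nat list \<Rightarrow> nat list \<Rightarrow> nat \<Rightarrow> rat" where
  "ratio s e i = of_nat (pad_e e ! i) / of_nat (pad_s s ! i)"

definition asc :: "nat list \<Rightarrow> nat list \<Rightarrow> nat" where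
  "asc s e = card {i. i \<le> length s \<and> ratio s e i < ratio s e (Suc i)}"

definition col :: "nat list \<Rightarrow> nat list \<Rightarrow> nat" where
  "col s e = card {i. i \<le> length s \<and> ratio s e i = ratio s e (Suc i)}"

definition Etilde :: "nat list \<Rightarrow> int poly" where
  "Etilde s = (\<Sum>e\<in>inv_seqs s. [:1, 1:] ^ col s e * [:0, 1:] ^ asc s e)"

definition des :: "nat \<Rightarrow> (nat \<Rightarrow> nat) \<Rightarrow> nat" where
  "des n \<sigma> = card {i \<in> {1..<n}. \<sigma> i > \<sigma> (Suc i)}"

definition eulerian :: "nat \<Rightarrow> int poly" where
  "eulerian n = (if n = 0 then 1 else
     (\<Sum>\<sigma>\<in>{\<sigma>. \<sigma> permutes {1..n}}. [:0, 1:] ^ des n \<sigma>))"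

text \<open>E_{k,n}; meaningful for k \<le> n (and n \<ge> 1 when k = 1). For k \<ge> 2,
  s = (n-k+2, ..., n) is the list [n-k+2 ..< n+1] of length k-1.\<close>
definition Ekn :: "nat \<Rightarrow> nat \<Rightarrow> int poly" where
  "Ekn k n = (if k = 0 then 1 else if k = 1 then [:1, 1:]
              else Etilde [n - k + 2 ..< n + 1])"

end

theory Submission
  imports Defs "HOL-Library.Infinite_Set"
begin


definition pw :: "nat \<Rightarrow> nat \<Rightarrow> int poly" where
  "pw a b = (if a < b then [:0,1:] else if a = 0 \<and> b = 0 then [:1,1:] else 1)"

fun wt :: "nat list \<Rightarrow> int poly" where
  "wt [] = 1" | "wt [a] = 1" | "wt (a # b # r) = pw a b * wt (b # r)"

lemma wt_append: "wt (xs @ y # ys) = wt (xs @ [y]) * wt (y # ys)"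
proof (induction xs)
  case Nil then show ?case by simp
next
  case (Cons a xs)
  then show ?case by (cases xs) auto
qed

lemma wt_snoc: "xs \<noteq> [] \<Longrightarrow> wt (xs @ [z]) = wt xs * pw (last xs) z"
proof -
  assume "xs \<noteq> []"
  then obtain ys where ys: "xs = butlast xs @ [last xs]" by simp
  have "wt (butlast xs @ last xs # [z]) = wt (butlast xs @ [last xs]) * wt [last xs, z]"
    by (rule wt_append)
  then show ?thesis using ys by (metis append.assoc append_Cons append_Nil mult.right_neutral wt.simps(2) wt.simps(3))
qed

lemma wt_prod: "wt p = (\<Prod>i<length p - 1. pw (p!i) (p!Suc i))"
proof (induction p rule: wt.induct)
  case (3 a b r)
  have "(\<Prod>i<length (a#b#r) - 1. pw ((a#b#r)!i) ((a#b#r)!Suc i))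
      = (\<Prod>i<Suc (length r). pw ((a#b#r)!i) ((a#b#r)!Suc i))" by simp
  also have "\<dots> = pw a b * (\<Prod>i<length r. pw ((b#r)!i) ((b#r)!Suc i))"
    by (subst prod.lessThan_Suc_shift) simp
  finally show ?case using 3 by simp
qed auto

lemma prod_pw_card:
  fixes p :: "nat \<Rightarrow> nat"
  assumes fin: "finite I"
  shows "(\<Prod>i\<in>I. pw (p i) (p (Suc i)))
    = [:1,1:] ^ card {i\<in>I. p i = 0 \<and> p (Suc i) = 0} * [:0,1:] ^ card {i\<in>I. p i < p (Suc i)}"
proof -
  have "(\<Prod>i\<in>I. pw (p i) (p (Suc i))) =
     (\<Prod>i\<in>I. if p i < p (Suc i) then [:0,1:] else (if p i = 0 \<and> p (Suc i) = 0 then [:1,1:] else 1))"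
    by (simp add: pw_def)
  also have "\<dots> = (\<Prod>i\<in>I \<inter> {i. p i < p (Suc i)}. [:0,1:]) *
      (\<Prod>i\<in>I \<inter> - {i. p i < p (Suc i)}. (if p i = 0 \<and> p (Suc i) = 0 then [:1,1:] else 1))"
    by (rule prod.If_cases[OF fin])
  also have "(\<Prod>i\<in>I \<inter> - {i. p i < p (Suc i)}. (if p i = 0 \<and> p (Suc i) = 0 then [:1,1:] else 1))
     = (\<Prod>i\<in>I \<inter> - {i. p i < p (Suc i)} \<inter> {i. p i = 0 \<and> p (Suc i) = 0}. [:1,1:]::int poly)"
    using fin by (simp add: prod.If_cases)
  also have "I \<inter> - {i. p i < p (Suc i)} \<inter> {i. p i = 0 \<and> p (Suc i) = 0} = {i\<in>I. p i = 0 \<and> p (Suc i) = 0}"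
    by auto
  also have "I \<inter> {i. p i < p (Suc i)} = {i\<in>I. p i < p (Suc i)}" by auto
  finally show ?thesis by (simp add: mult.commute)
qed

lemma nat_cross_mid:
  fixes a b s :: nat
  assumes "a < s"
  shows "a * Suc s < b * s \<longleftrightarrow> a < b" and "a * Suc s = b * s \<longleftrightarrow> a = 0 \<and> b = 0"
proof -
  have 1: "a * Suc s < b * s" if "a < b"
  proof -
    have "Suc a * s \<le> b * s" using that by (intro mult_le_mono1) simp
    then show ?thesis using assms by simp
  qed
  have 2: "b * s \<le> a * Suc s" if "b \<le> a"
  proof -
    have "b * s \<le> a * s" using that by (intro mult_le_mono1)
    also have "\<dots> \<le> a * Suc s" by simp
    finally show ?thesis .
  qed
  show "a * Suc s < b * s \<longleftrightarrow> a < b" using 1 2 by (meson leI not_le)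
  show "a * Suc s = b * s \<longleftrightarrow> a = 0 \<and> b = 0"
  proof
    assume h: "a * Suc s = b * s"
    have "\<not> a < b" using 1 h by (metis less_irrefl)
    moreover have "\<not> b < a"
    proof
      assume "b < a"
      then have "b * s < a * s" using assms by simp
      moreover have "a * s \<le> a * Suc s" by simp
      ultimately show False using h by linarith
    qed
    ultimately have "a = b" by simp
    then show "a = 0 \<and> b = 0" using h by simp
  qed simp
qed

lemma ratio_cmp:
  fixes a b sa sb :: nat
  assumes "0 < sa" "0 < sb" "a < sa"
    and cs: "(a = 0 \<and> sa = 1) \<or> (b = 0 \<and> sb = 1) \<or> (sb = Suc sa)"
  shows "(of_nat a / of_nat sa < (of_nat b / of_nat sb :: rat)) \<longleftrightarrow> a < b"
    and "(of_nat a / of_nat sa = (of_nat b / of_nat sb :: rat)) \<longleftrightarrow> a = 0 \<and> b = 0"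
proof -
  have e1: "(of_nat a / of_nat sa < (of_nat b / of_nat sb :: rat)) \<longleftrightarrow> a * sb < b * sa"
  proof -
    have "(of_nat a / of_nat sa < (of_nat b / of_nat sb :: rat)) \<longleftrightarrow>
        of_nat a * of_nat sb < (of_nat b * of_nat sa :: rat)"
      using assms(1,2) by (simp add: divide_simps)
    also have "\<dots> \<longleftrightarrow> a * sb < b * sa" by (metis of_nat_less_iff of_nat_mult)
    finally show ?thesis .
  qed
  have e2: "(of_nat a / of_nat sa = (of_nat b / of_nat sb :: rat)) \<longleftrightarrow> a * sb = b * sa"
  proof -
    have "(of_nat a / of_nat sa = (of_nat b / of_nat sb :: rat)) \<longleftrightarrow>
        of_nat a * of_nat sb = (of_nat b * of_nat sa :: rat)"
      using assms(1,2) by (simp add: divide_simps)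
    also have "\<dots> \<longleftrightarrow> a * sb = b * sa" by (metis of_nat_eq_iff of_nat_mult)
    finally show ?thesis .
  qed
  show "(of_nat a / of_nat sa < (of_nat b / of_nat sb :: rat)) \<longleftrightarrow> a < b"
    unfolding e1 using cs nat_cross_mid(1)[OF assms(3), of b] assms(1,2) by auto
  show "(of_nat a / of_nat sa = (of_nat b / of_nat sb :: rat)) \<longleftrightarrow> a = 0 \<and> b = 0"
    unfolding e2 using cs nat_cross_mid(2)[OF assms(3), of b] assms(1,2) by auto
qed

definition Seq :: "nat \<Rightarrow> nat \<Rightarrow> nat list set" where
  "Seq c m = {e. length e = m \<and> (\<forall>i<m. e!i < c+1+i)}"

lemma inv_seqs_consec: "inv_seqs [c+1..<c+m+1] = Seq c m"
  unfolding inv_seqs_def Seq_def by (auto simp del: upt_Suc)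

lemma pad_s_nth:
  assumes "i \<le> Suc m"
  shows "pad_s [c+1..<c+m+1] ! i = (if i = 0 \<or> i = Suc m then 1 else c+i)"
  using assms unfolding pad_s_def
  by (auto simp: nth_append nth_Cons' split: if_splits)

lemma pad_e_nth:
  assumes "length e = m" "i \<le> Suc m"
  shows "pad_e e ! i = (if i = 0 \<or> i = Suc m then 0 else e!(i-1))"
  using assms unfolding pad_e_def
  by (auto simp: nth_append nth_Cons' split: if_splits)

lemma ratio_consec:
  assumes e: "e \<in> Seq c m" and i: "i \<le> m"
  shows "ratio [c+1..<c+m+1] e i < ratio [c+1..<c+m+1] e (Suc i) \<longleftrightarrow> pad_e e ! i < pad_e e ! Suc i"
    and "ratio [c+1..<c+m+1] e i = ratio [c+1..<c+m+1] e (Suc i) \<longleftrightarrow> pad_e e ! i = 0 \<and> pad_e e ! Suc i = 0"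
proof -
  let ?s = "[c+1..<c+m+1]"
  have len: "length e = m" and bd: "\<And>i. i < m \<Longrightarrow> e!i < c+1+i" using e by (auto simp: Seq_def)
  define a where "a = pad_e e ! i"
  define b where "b = pad_e e ! Suc i"
  define sa where "sa = pad_s ?s ! i"
  define sb where "sb = pad_s ?s ! Suc i"
  have sa: "sa = (if i = 0 then 1 else c + i)" unfolding sa_def using i by (subst pad_s_nth) auto
  have sb: "sb = (if Suc i = Suc m then 1 else c + Suc i)" unfolding sb_def using i by (subst pad_s_nth) auto
  have a: "a = (if i = 0 then 0 else e!(i-1))" unfolding a_def using i len by (subst pad_e_nth) auto
  have b: "b = (if Suc i = Suc m then 0 else e!i)" unfolding b_def using i len by (subst pad_e_nth) auto
  have p1: "0 < sa" "0 < sb" using sa sb by auto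
  have p2: "a < sa"
  proof (cases "i = 0")
    case False
    then have "e!(i-1) < c+1+(i-1)" using bd[of "i-1"] i by simp
    then show ?thesis using False a sa by simp
  qed (simp add: a sa)
  have p3: "(a = 0 \<and> sa = 1) \<or> (b = 0 \<and> sb = 1) \<or> (sb = Suc sa)"
    using a b sa sb by auto
  have r: "ratio ?s e i = of_nat a / of_nat sa" "ratio ?s e (Suc i) = of_nat b / of_nat sb"
    unfolding ratio_def a_def b_def sa_def sb_def by auto
  show "ratio ?s e i < ratio ?s e (Suc i) \<longleftrightarrow> pad_e e ! i < pad_e e ! Suc i"
    unfolding r using ratio_cmp(1)[OF p1 p2 p3] a_def b_def by simp
  show "ratio ?s e i = ratio ?s e (Suc i) \<longleftrightarrow> pad_e e ! i = 0 \<and> pad_e e ! Suc i = 0"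
    unfolding r using ratio_cmp(2)[OF p1 p2 p3] a_def b_def by simp
qed

lemma term_consec:
  assumes e: "e \<in> Seq c m"
  shows "[:1, 1:] ^ col [c+1..<c+m+1] e * [:0, 1:] ^ asc [c+1..<c+m+1] e = wt (0 # e @ [0])"
proof -
  let ?s = "[c+1..<c+m+1]"
  let ?p = "pad_e e"
  have len: "length e = m" using e by (simp add: Seq_def)
  have c: "col ?s e = card {i\<in>{..m}. ?p ! i = 0 \<and> ?p ! Suc i = 0}"
    unfolding col_def using ratio_consec(2)[OF e] by (intro arg_cong[where f=card]) auto
  have a: "asc ?s e = card {i\<in>{..m}. ?p ! i < ?p ! Suc i}"
    unfolding asc_def using ratio_consec(1)[OF e] by (intro arg_cong[where f=card]) auto
  have "wt (0 # e @ [0]) = wt ?p" by (simp add: pad_e_def)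
  also have "\<dots> = (\<Prod>i<length ?p - 1. pw (?p!i) (?p!Suc i))" by (rule wt_prod)
  also have "{..<length ?p - 1} = {..m}" using len by (auto simp: pad_e_def)
  also have "(\<Prod>i\<in>{..m}. pw (?p!i) (?p!Suc i)) =
     [:1,1:] ^ card {i\<in>{..m}. ?p ! i = 0 \<and> ?p ! Suc i = 0} * [:0,1:] ^ card {i\<in>{..m}. ?p ! i < ?p ! Suc i}"
    by (rule prod_pw_card[where p="\<lambda>i. ?p ! i"]) simp
  finally show ?thesis using c a by simp
qed

lemma Etilde_consec: "Etilde [c+1..<c+m+1] = (\<Sum>e\<in>Seq c m. wt (0 # e @ [0]))"
  unfolding Etilde_def inv_seqs_consec by (rule sum.cong[OF refl]) (rule term_consec)




definition ZSeq :: "nat \<Rightarrow> nat \<Rightarrow> nat list set" where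
  "ZSeq c q = {e \<in> Seq c q. last (0 # e) = 0}"

definition PosSeq :: "nat \<Rightarrow> nat \<Rightarrow> nat list set" where
  "PosSeq c j = {a. length a = j \<and> (\<forall>i<j. 0 < a!i \<and> a!i < c+1+i)}"

definition Zs :: "nat \<Rightarrow> nat \<Rightarrow> int poly" where
  "Zs c q = (\<Sum>e\<in>ZSeq c q. wt (0 # e))"

definition Fs :: "nat \<Rightarrow> nat \<Rightarrow> int poly" where
  "Fs c m = (\<Sum>e\<in>Seq c m. wt (0 # e @ [0]))"

definition Ps :: "nat \<Rightarrow> nat \<Rightarrow> int poly" where
  "Ps c j = (\<Sum>a\<in>PosSeq c j. wt a)"

lemma finite_Seq: "finite (Seq c m)"
proof -
  have "Seq c m \<subseteq> {xs. set xs \<subseteq> {..<c+1+m} \<and> length xs = m}"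
  proof
    fix x assume "x \<in> Seq c m"
    then have l: "length x = m" and b: "\<forall>i<m. x!i < c+1+i" unfolding Seq_def by auto
    have "x!i < c+1+m" if "i < m" for i using b that by (metis add_less_mono less_or_eq_imp_le nat_add_left_cancel_less order.strict_trans2)
    then show "x \<in> {xs. set xs \<subseteq> {..<c+1+m} \<and> length xs = m}" using l by (auto simp: in_set_conv_nth)
  qed
  then show ?thesis by (rule finite_subset) (rule finite_lists_length_eq, simp)
qed

lemma PosSeq_sub: "PosSeq c j \<subseteq> Seq c j"
  unfolding PosSeq_def Seq_def by auto

lemma finite_PosSeq: "finite (PosSeq c j)"
  using finite_subset[OF PosSeq_sub finite_Seq] .

lemma finite_ZSeq: "finite (ZSeq c j)"
  using finite_Seq[of c j] unfolding ZSeq_def by simp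

lemma Zs_0: "Zs c 0 = 1"
proof -
  have "ZSeq c 0 = {[]}" unfolding ZSeq_def Seq_def by auto
  then show ?thesis unfolding Zs_def by simp
qed

lemma Zs_Suc: "Zs c (Suc m) = Fs c m"
proof -
  have inj: "inj_on (\<lambda>e. e @ [0::nat]) (Seq c m)" by (auto simp: inj_on_def)
  have img: "ZSeq c (Suc m) = (\<lambda>e. e @ [0]) ` Seq c m"
  proof
    show "(\<lambda>e. e @ [0]) ` Seq c m \<subseteq> ZSeq c (Suc m)"
      unfolding ZSeq_def Seq_def by (auto simp: nth_append)
  next
    show "ZSeq c (Suc m) \<subseteq> (\<lambda>e. e @ [0]) ` Seq c m"
    proof
      fix e assume e: "e \<in> ZSeq c (Suc m)"
      then have len: "length e = Suc m" and bd: "\<forall>i<Suc m. e!i < c+1+i" and l: "last (0#e) = 0"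
        unfolding ZSeq_def Seq_def by auto
      have ne: "e \<noteq> []" using len by auto
      have le: "last e = 0" using l ne by simp
      have eq: "e = butlast e @ [0]" using ne le by (metis append_butlast_last_id)
      have "butlast e \<in> Seq c m"
        unfolding Seq_def using len bd by (auto simp: nth_butlast)
      then show "e \<in> (\<lambda>e. e @ [0]) ` Seq c m" using eq by blast
    qed
  qed
  show ?thesis unfolding Zs_def Fs_def img sum.reindex[OF inj] by simp
qed

lemma ZSeq_app_Seq:
  assumes "q \<le> m" "p \<in> ZSeq c q" "s \<in> PosSeq (c+q) (m-q)"
  shows "p @ s \<in> Seq c m"
proof -
  have lp: "length p = q" and bp: "\<forall>i<q. p!i < c+1+i" using assms(2) unfolding ZSeq_def Seq_def by auto
  have ls: "length s = m - q" and bs: "\<forall>i<m-q. s!i < c+q+1+i" using assms(3) unfolding PosSeq_def by auto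
  have "(p @ s) ! i < c+1+i" if "i < m" for i
  proof (cases "i < q")
    case True then show ?thesis using bp lp by (simp add: nth_append)
  next
    case False
    then have "s ! (i - q) < c+q+1+(i-q)" using bs[rule_format, of "i-q"] that by simp
    then show ?thesis using False lp by (simp add: nth_append)
  qed
  then show ?thesis unfolding Seq_def using lp ls assms(1) by simp
qed

lemma Seq_decomp:
  "Seq c m = (\<Union>q\<in>{..m}. (\<lambda>(p,s). p @ s) ` (ZSeq c q \<times> PosSeq (c+q) (m-q)))"
proof
  show "(\<Union>q\<in>{..m}. (\<lambda>(p,s). p @ s) ` (ZSeq c q \<times> PosSeq (c+q) (m-q))) \<subseteq> Seq c m"
    using ZSeq_app_Seq by auto
next
  show "Seq c m \<subseteq> (\<Union>q\<in>{..m}. (\<lambda>(p,s). p @ s) ` (ZSeq c q \<times> PosSeq (c+q) (m-q)))"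
  proof
    fix e assume e: "e \<in> Seq c m"
    then have len: "length e = m" and bd: "\<forall>i<m. e!i < c+1+i" unfolding Seq_def by auto
    show "e \<in> (\<Union>q\<in>{..m}. (\<lambda>(p,s). p @ s) ` (ZSeq c q \<times> PosSeq (c+q) (m-q)))"
    proof (cases "\<forall>i<m. e!i \<noteq> 0")
      case True
      have "[] \<in> ZSeq c 0" unfolding ZSeq_def Seq_def by simp
      moreover have "e \<in> PosSeq (c+0) (m-0)" unfolding PosSeq_def using len bd True by auto
      ultimately have "e \<in> (\<lambda>(p,s). p @ s) ` (ZSeq c 0 \<times> PosSeq (c+0) (m-0))"
        by (auto intro: image_eqI[where x="([], e)"])
      then show ?thesis by blast
    next
      case False
      define Z where "Z = {i. i < m \<and> e!i = 0}"
      have finZ: "finite Z" unfolding Z_def by simp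
      have neZ: "Z \<noteq> {}" using False unfolding Z_def by auto
      define t where "t = Max Z"
      have tZ: "t \<in> Z" unfolding t_def using finZ neZ by simp
      have tmax: "\<And>i. i \<in> Z \<Longrightarrow> i \<le> t" unfolding t_def using finZ by simp
      have tm: "t < m" and te: "e!t = 0" using tZ unfolding Z_def by auto
      define q where "q = Suc t"
      have qm: "q \<le> m" using tm q_def by simp
      have p: "take q e \<in> ZSeq c q"
      proof -
        have "take q e = take t e @ [e!t]" using q_def tm len by (simp add: take_Suc_conv_app_nth)
        then have "last (0 # take q e) = 0" using te by simp
        moreover have "length (take q e) = q" using qm len by simp
        moreover have "\<forall>i<q. take q e ! i < c+1+i" using bd qm len by simp
        ultimately show ?thesis unfolding ZSeq_def Seq_def by simp
      qed
      have s: "drop q e \<in> PosSeq (c+q) (m-q)"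
      proof -
        have "0 < e!(q+i)" if "i < m - q" for i
        proof (rule ccontr)
          assume "\<not> 0 < e!(q+i)"
          then have "q+i \<in> Z" unfolding Z_def using that by auto
          then show False using tmax q_def by fastforce
        qed
        moreover have "e!(q+i) < c+q+1+i" if "i < m - q" for i
        proof -
          have "e!(q+i) < c+1+(q+i)" using bd that by simp
          then show ?thesis by simp
        qed
        ultimately show ?thesis unfolding PosSeq_def using len qm by auto
      qed
      have "e = take q e @ drop q e" by simp
      then have "e \<in> (\<lambda>(p,s). p @ s) ` (ZSeq c q \<times> PosSeq (c+q) (m-q))"
        using p s by (auto intro: image_eqI[where x="(take q e, drop q e)"])
      then show ?thesis using qm by blast
    qed
  qed
qed

lemma Seq_decomp_disj:
  assumes "q1 \<le> m" "q2 \<le> m" "q1 \<noteq> q2"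
  shows "(\<lambda>(p,s). p @ s) ` (ZSeq c q1 \<times> PosSeq (c+q1) (m-q1)) \<inter>
         (\<lambda>(p,s). p @ s) ` (ZSeq c q2 \<times> PosSeq (c+q2) (m-q2)) = {}"
proof -
  have key: "False" if "q1 < q2" "p1 \<in> ZSeq c q1" "s1 \<in> PosSeq (c+q1) (m-q1)"
     "p2 \<in> ZSeq c q2" "s2 \<in> PosSeq (c+q2) (m-q2)" "p1 @ s1 = p2 @ s2" "q2 \<le> m" for q1 q2 p1 s1 p2 s2
  proof -
    have l1: "length p1 = q1" and l2: "length p2 = q2" and z: "last (0#p2) = 0"
      using that unfolding ZSeq_def Seq_def by auto
    have "p2 \<noteq> []" using l2 that(1) by auto
    then have "p2 ! (q2 - 1) = 0" using z l2 by (simp add: last_conv_nth)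
    then have "(p2 @ s2) ! (q2 - 1) = 0" using l2 that(1) by (simp add: nth_append)
    moreover have "\<not> q2 - 1 < q1" using that(1) by simp
    then have "(p1 @ s1) ! (q2 - 1) = s1 ! (q2 - 1 - q1)" using l1 by (simp add: nth_append)
    moreover have "0 < s1 ! (q2 - 1 - q1)" using that(1,3,7) unfolding PosSeq_def by auto
    ultimately show False using that(6) by simp
  qed
  show ?thesis
  proof (rule ccontr)
    assume "\<not> ?thesis"
    then obtain p1 s1 p2 s2 where "p1 \<in> ZSeq c q1" "s1 \<in> PosSeq (c+q1) (m-q1)"
     "p2 \<in> ZSeq c q2" "s2 \<in> PosSeq (c+q2) (m-q2)" "p1 @ s1 = p2 @ s2" by auto
    then show False using key assms by (metis linorder_neqE_nat)
  qed
qed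

lemma inj_app:
  "inj_on (\<lambda>(p,s). p @ s) (ZSeq c q \<times> PosSeq c' j)"
  unfolding inj_on_def ZSeq_def Seq_def by auto

lemma wt_split:
  assumes "last (0 # p) = 0"
  shows "wt (0 # p @ s @ [0]) = wt (0 # p) * wt (0 # s @ [0])"
proof -
  have "0 # p = butlast (0 # p) @ [0]" using assms by (metis append_butlast_last_id list.distinct(1))
  then have "0 # p @ s @ [0] = butlast (0 # p) @ 0 # (s @ [0])" by (metis append.assoc append_Cons append_Nil)
  then have "wt (0 # p @ s @ [0]) = wt (butlast (0 # p) @ [0]) * wt (0 # s @ [0])"
    using wt_append by metis
  then show ?thesis using \<open>0 # p = butlast (0 # p) @ [0]\<close> by metis
qed

lemma wt0s:
  assumes "s \<in> PosSeq c' j"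
  shows "wt (0 # s @ [0]) = (if j = 0 then [:1,1:] else [:0,1:] * wt s)"
proof (cases "j = 0")
  case True then show ?thesis using assms by (simp add: PosSeq_def pw_def)
next
  case False
  then obtain a s' where s: "s = a # s'" using assms unfolding PosSeq_def by (cases s) auto
  have a: "0 < a" using assms False s unfolding PosSeq_def by auto
  have l: "0 < last s" using assms False unfolding PosSeq_def by (auto simp: last_conv_nth)
  have "wt (0 # s @ [0]) = pw 0 a * wt (s @ [0])" by (simp add: s)
  also have "wt (s @ [0]) = wt s * pw (last s) 0" by (rule wt_snoc) (simp add: s)
  finally show ?thesis using a l False by (simp add: pw_def)
qed

lemma Fs_decomp:
  "Fs c m = (\<Sum>q\<in>{..m}. Zs c q * (\<Sum>s\<in>PosSeq (c+q) (m-q). wt (0 # s @ [0])))"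
proof -
  have "Fs c m = (\<Sum>q\<in>{..m}. \<Sum>e\<in>(\<lambda>(p,s). p @ s) ` (ZSeq c q \<times> PosSeq (c+q) (m-q)). wt (0 # e @ [0]))"
    unfolding Fs_def
    apply (subst Seq_decomp)
    apply (rule sum.UNION_disjoint)
    using finite_ZSeq finite_PosSeq Seq_decomp_disj by auto
  also have "\<dots> = (\<Sum>q\<in>{..m}. Zs c q * (\<Sum>s\<in>PosSeq (c+q) (m-q). wt (0 # s @ [0])))"
  proof (rule sum.cong[OF refl])
    fix q assume q: "q \<in> {..m}"
    have "(\<Sum>e\<in>(\<lambda>(p,s). p @ s) ` (ZSeq c q \<times> PosSeq (c+q) (m-q)). wt (0 # e @ [0]))
       = (\<Sum>x\<in>ZSeq c q \<times> PosSeq (c+q) (m-q). wt (0 # (case x of (p,s) \<Rightarrow> p @ s) @ [0]))"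
      by (subst sum.reindex[OF inj_app]) (simp add: comp_def)
    also have "\<dots> = (\<Sum>x\<in>ZSeq c q \<times> PosSeq (c+q) (m-q). (case x of (p,s) \<Rightarrow> wt (0 # p) * wt (0 # s @ [0])))"
      by (rule sum.cong[OF refl]) (auto simp: ZSeq_def wt_split)
    also have "\<dots> = (\<Sum>p\<in>ZSeq c q. \<Sum>s\<in>PosSeq (c+q) (m-q). wt (0 # p) * wt (0 # s @ [0]))"
      by (simp add: sum.cartesian_product)
    also have "\<dots> = Zs c q * (\<Sum>s\<in>PosSeq (c+q) (m-q). wt (0 # s @ [0]))"
      unfolding Zs_def by (simp add: sum_product)
    finally show "(\<Sum>e\<in>(\<lambda>(p,s). p @ s) ` (ZSeq c q \<times> PosSeq (c+q) (m-q)). wt (0 # e @ [0]))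
       = Zs c q * (\<Sum>s\<in>PosSeq (c+q) (m-q). wt (0 # s @ [0]))" .
  qed
  finally show ?thesis .
qed

lemma PosSeq_0: "PosSeq c 0 = {[]}" unfolding PosSeq_def by auto

lemma Zs_rec:
  "Zs c (Suc m) = Zs c m + [:0,1:] * (\<Sum>q\<in>{..m}. Zs c q * Ps (c+q) (m-q))"
proof -
  have A: "(\<Sum>s\<in>PosSeq (c+q) (m-q). wt (0 # s @ [0])) = [:0,1:] * Ps (c+q) (m-q)" if "q < m" for q
    unfolding Ps_def sum_distrib_left using that by (intro sum.cong[OF refl]) (simp add: wt0s)
  have B: "(\<Sum>s\<in>PosSeq (c+m) (m-m). wt (0 # s @ [0])) = [:1,1:]"
    by (simp add: PosSeq_0 pw_def)
  have Pm: "Ps (c+m) (m-m) = 1" by (simp add: Ps_def PosSeq_0)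
  have 1: "Zs c (Suc m) = (\<Sum>q\<in>{..<Suc m}. Zs c q * (\<Sum>s\<in>PosSeq (c+q) (m-q). wt (0 # s @ [0])))"
    unfolding Zs_Suc Fs_decomp by (simp add: lessThan_Suc_atMost)
  also have "\<dots> = (\<Sum>q\<in>{..<m}. Zs c q * (\<Sum>s\<in>PosSeq (c+q) (m-q). wt (0 # s @ [0])))
       + Zs c m * (\<Sum>s\<in>PosSeq (c+m) (m-m). wt (0 # s @ [0]))"
    by (rule sum.lessThan_Suc)
  also have "\<dots> = (\<Sum>q\<in>{..<m}. Zs c q * ([:0,1:] * Ps (c+q) (m-q))) + Zs c m * [:1,1:]"
    unfolding B by (simp add: A)
  finally have 2: "Zs c (Suc m) = (\<Sum>q\<in>{..<m}. Zs c q * ([:0,1:] * Ps (c+q) (m-q))) + Zs c m * [:1,1:]" .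
  have 3: "(\<Sum>q\<in>{..m}. Zs c q * Ps (c+q) (m-q)) = (\<Sum>q\<in>{..<m}. Zs c q * Ps (c+q) (m-q)) + Zs c m * Ps (c+m) (m-m)"
    by (simp add: lessThan_Suc_atMost[symmetric])
  have 4: "(\<Sum>q\<in>{..<m}. Zs c q * ([:0,1:] * Ps (c+q) (m-q))) = [:0,1:] * (\<Sum>q\<in>{..<m}. Zs c q * Ps (c+q) (m-q))"
    by (simp add: sum_distrib_left mult.left_commute)
  have 5: "[:1,1:] = 1 + ([:0,1:] :: int poly)" by (simp add: one_pCons)
  show ?thesis unfolding 2 3 4 Pm 5 by (simp add: distrib_left distrib_right)
qed




definition SB :: "nat \<Rightarrow> nat \<Rightarrow> (nat \<Rightarrow> int poly) \<Rightarrow> int poly" where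
  "SB c j \<phi> = (\<Sum>a\<in>PosSeq c j. wt a * \<phi> (last a))"

lemma PosSeq_Suc:
  "PosSeq c (Suc j) = (\<lambda>(a,z). a @ [z]) ` (PosSeq c j \<times> {1..c+j})"
proof
  show "(\<lambda>(a,z). a @ [z]) ` (PosSeq c j \<times> {1..c+j}) \<subseteq> PosSeq c (Suc j)"
  proof
    fix e assume "e \<in> (\<lambda>(a,z). a @ [z]) ` (PosSeq c j \<times> {1..c+j})"
    then obtain a z where e: "e = a @ [z]" and a: "a \<in> PosSeq c j" and z: "z \<in> {1..c+j}" by auto
    have la: "length a = j" and ba: "\<forall>i<j. 0 < a!i \<and> a!i < c+1+i" using a unfolding PosSeq_def by auto
    have "0 < e!i \<and> e!i < c+1+i" if "i < Suc j" for i
    proof (cases "i < j")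
      case True then show ?thesis using ba la e by (simp add: nth_append)
    next
      case False then have "i = j" using that by simp
      then show ?thesis using z la e by (simp add: nth_append)
    qed
    then show "e \<in> PosSeq c (Suc j)" unfolding PosSeq_def using la e by simp
  qed
next
  show "PosSeq c (Suc j) \<subseteq> (\<lambda>(a,z). a @ [z]) ` (PosSeq c j \<times> {1..c+j})"
  proof
    fix e assume e: "e \<in> PosSeq c (Suc j)"
    then have len: "length e = Suc j" and bd: "\<forall>i<Suc j. 0 < e!i \<and> e!i < c+1+i"
      unfolding PosSeq_def by auto
    have ne: "e \<noteq> []" using len by auto
    have eq: "e = butlast e @ [last e]" using ne by simp
    have "last e = e ! j" using len ne by (simp add: last_conv_nth)
    moreover have "0 < e!j" "e!j < c+1+j" using bd by auto
    ultimately have l: "last e \<in> {1..c+j}" by simp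
    have "butlast e \<in> PosSeq c j" unfolding PosSeq_def using len bd by (auto simp: nth_butlast)
    then show "e \<in> (\<lambda>(a,z). a @ [z]) ` (PosSeq c j \<times> {1..c+j})"
      using l eq by (auto intro!: image_eqI[where x="(butlast e, last e)"])
  qed
qed

lemma SB_Suc:
  assumes "1 \<le> j"
  shows "SB c (Suc j) \<phi> = SB c j (\<lambda>v. \<Sum>z\<in>{1..c+j}. (if v < z then [:0,1:] else 1) * \<phi> z)"
proof -
  have inj: "inj_on (\<lambda>(a,z). a @ [z::nat]) (PosSeq c j \<times> {1..c+j})" by (auto simp: inj_on_def)
  have "SB c (Suc j) \<phi> = (\<Sum>x\<in>PosSeq c j \<times> {1..c+j}. (case x of (a,z) \<Rightarrow> wt (a @ [z]) * \<phi> z))"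
    unfolding SB_def PosSeq_Suc by (subst sum.reindex[OF inj]) (simp add: comp_def case_prod_unfold)
  also have "\<dots> = (\<Sum>a\<in>PosSeq c j. \<Sum>z\<in>{1..c+j}. wt (a @ [z]) * \<phi> z)"
    by (simp add: sum.cartesian_product)
  also have "\<dots> = (\<Sum>a\<in>PosSeq c j. wt a * (\<Sum>z\<in>{1..c+j}. (if last a < z then [:0,1:] else 1) * \<phi> z))"
  proof (rule sum.cong[OF refl])
    fix a assume a: "a \<in> PosSeq c j"
    then have ne: "a \<noteq> []" using assms unfolding PosSeq_def by auto
    show "(\<Sum>z\<in>{1..c+j}. wt (a @ [z]) * \<phi> z) = wt a * (\<Sum>z\<in>{1..c+j}. (if last a < z then [:0,1:] else 1) * \<phi> z)"
      unfolding sum_distrib_left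
      by (rule sum.cong[OF refl]) (auto simp: wt_snoc[OF ne] pw_def)
  qed
  finally show ?thesis unfolding SB_def .
qed

lemma SB_1: "SB c 1 \<phi> = (\<Sum>z\<in>{1..c}. \<phi> z)"
proof -
  have "PosSeq c (Suc 0) = (\<lambda>(a,z). a @ [z]) ` (PosSeq c 0 \<times> {1..c+0})" by (rule PosSeq_Suc)
  moreover have "(\<lambda>(a,z). a @ [z]) ` (PosSeq c 0 \<times> {1..c+0}) = (\<lambda>z::nat. [z]) ` {1..c}"
    unfolding PosSeq_0 by (auto simp: image_iff)
  ultimately have P: "PosSeq c 1 = (\<lambda>z. [z]) ` {1..c}" by simp
  have inj: "inj_on (\<lambda>z::nat. [z]) {1..c}" by (auto simp: inj_on_def)
  show ?thesis unfolding SB_def P sum.reindex[OF inj] by simp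
qed

definition Inj :: "nat \<Rightarrow> nat \<Rightarrow> (nat \<Rightarrow> nat) set" where
  "Inj j B = {w. (\<forall>i\<in>{1..j}. w i \<in> {1..B}) \<and> inj_on w {1..j} \<and> (\<forall>i. i \<notin> {1..j} \<longrightarrow> w i = i)}"

definition SI :: "nat \<Rightarrow> nat \<Rightarrow> (nat \<Rightarrow> int poly) \<Rightarrow> int poly" where
  "SI j B \<phi> = (\<Sum>w\<in>Inj j B. [:0,1:] ^ des j w * \<phi> (w j))"

definition ins :: "nat \<Rightarrow> (nat \<Rightarrow> nat) \<Rightarrow> nat \<Rightarrow> nat \<Rightarrow> nat" where
  "ins j w y = (\<lambda>i. if i \<in> {1..j} then (if w i < y then w i else Suc (w i)) else if i = Suc j then y else i)"

definition del :: "nat \<Rightarrow> (nat \<Rightarrow> nat) \<Rightarrow> nat \<Rightarrow> nat" where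
  "del j w = (\<lambda>i. if i \<in> {1..j} then (if w i < w (Suc j) then w i else w i - 1) else i)"

lemma finite_Inj: "finite (Inj j B)"
proof -
  let ?f = "\<lambda>g i. if i \<in> {1..j} then g i else i"
  have "Inj j B \<subseteq> ?f ` (PiE {1..j} (\<lambda>_. {1..B}))"
  proof
    fix w assume w: "w \<in> Inj j B"
    have "w = ?f (restrict w {1..j})" using w unfolding Inj_def by (auto simp: fun_eq_iff)
    moreover have "restrict w {1..j} \<in> PiE {1..j} (\<lambda>_. {1..B})" using w unfolding Inj_def by auto
    ultimately show "w \<in> ?f ` (PiE {1..j} (\<lambda>_. {1..B}))" by blast
  qed
  then show ?thesis by (rule finite_subset) (intro finite_imageI finite_PiE; simp)
qed

lemma ins_in:
  assumes w: "w \<in> Inj j (B - 1)" and y: "y \<in> {1..B}"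
  shows "ins j w y \<in> Inj (Suc j) B"
proof -
  have wv: "\<And>i. i \<in> {1..j} \<Longrightarrow> w i \<in> {1..B-1}" and wi: "inj_on w {1..j}"
    and wo: "\<And>i. i \<notin> {1..j} \<Longrightarrow> w i = i" using w unfolding Inj_def by auto
  have v: "ins j w y i \<in> {1..B}" if "i \<in> {1..Suc j}" for i
    using that wv[of i] y unfolding ins_def by (auto simp: le_Suc_eq)
  have inj: "inj_on (ins j w y) {1..Suc j}"
  proof (rule inj_onI)
    fix a b assume a: "a \<in> {1..Suc j}" and b: "b \<in> {1..Suc j}" and e: "ins j w y a = ins j w y b"
    show "a = b"
    proof (cases "a = Suc j")
      case True
      show ?thesis
      proof (rule ccontr)
        assume "a \<noteq> b"
        then have "b \<in> {1..j}" using b True by auto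
        then show False using e True unfolding ins_def by (auto split: if_splits)
      qed
    next
      case False
      then have a': "a \<in> {1..j}" using a by auto
      show ?thesis
      proof (cases "b = Suc j")
        case True
        then show ?thesis using e a' unfolding ins_def by (auto split: if_splits)
      next
        case False
        then have b': "b \<in> {1..j}" using b by auto
        have "w a = w b" using e a' b' unfolding ins_def by (auto split: if_splits)
        then show ?thesis using wi a' b' by (auto dest: inj_onD)
      qed
    qed
  qed
  have o: "ins j w y i = i" if "i \<notin> {1..Suc j}" for i using that unfolding ins_def by auto
  show ?thesis unfolding Inj_def using v inj o by blast
qed

lemma del_in:
  assumes w: "w \<in> Inj (Suc j) B"
  shows "del j w \<in> Inj j (B - 1)" and "w (Suc j) \<in> {1..B}"
proof -
  have wv: "\<And>i. i \<in> {1..Suc j} \<Longrightarrow> w i \<in> {1..B}" and wi: "inj_on w {1..Suc j}"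
    and wo: "\<And>i. i \<notin> {1..Suc j} \<Longrightarrow> w i = i" using w unfolding Inj_def by auto
  show y: "w (Suc j) \<in> {1..B}" using wv by simp
  have ne: "w i \<noteq> w (Suc j)" if "i \<in> {1..j}" for i
    using that wi by (auto dest: inj_onD)
  have v: "del j w i \<in> {1..B-1}" if "i \<in> {1..j}" for i
  proof -
    have "w i \<in> {1..B}" using wv that by auto
    then show ?thesis using ne[OF that] y that unfolding del_def by auto
  qed
  have inj: "inj_on (del j w) {1..j}"
  proof (rule inj_onI)
    fix a b assume a: "a \<in> {1..j}" and b: "b \<in> {1..j}" and e: "del j w a = del j w b"
    have "w a = w b"
      using e a b ne[OF a] ne[OF b] wv[of a] wv[of b] unfolding del_def by (auto split: if_splits)
    then show "a = b" using wi a b by (auto dest: inj_onD)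
  qed
  have o: "del j w i = i" if "i \<notin> {1..j}" for i using that unfolding del_def by auto
  show "del j w \<in> Inj j (B - 1)" unfolding Inj_def using v inj o by blast
qed

lemma del_ins:
  assumes w: "w \<in> Inj j (B - 1)" and y: "y \<in> {1..B}"
  shows "del j (ins j w y) = w"
proof
  fix i
  have wo: "\<And>i. i \<notin> {1..j} \<Longrightarrow> w i = i" using w unfolding Inj_def by auto
  have iy: "ins j w y (Suc j) = y" unfolding ins_def by simp
  show "del j (ins j w y) i = w i"
    using wo[of i] unfolding del_def iy unfolding ins_def by auto
qed

lemma ins_del:
  assumes w: "w \<in> Inj (Suc j) B"
  shows "ins j (del j w) (w (Suc j)) = w"
proof
  fix i
  have wi: "inj_on w {1..Suc j}"
    and wo: "\<And>i. i \<notin> {1..Suc j} \<Longrightarrow> w i = i" using w unfolding Inj_def by auto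
  have ne: "w i \<noteq> w (Suc j)" if "i \<in> {1..j}" for i
    using that wi by (auto dest: inj_onD)
  show "ins j (del j w) (w (Suc j)) i = w i"
  proof (cases "i \<in> {1..j}")
    case True
    then show ?thesis using ne[OF True] unfolding ins_def del_def by auto
  next
    case False
    then show ?thesis using wo[of i] unfolding ins_def del_def by auto
  qed
qed

lemma bij_ins:
  "bij_betw (\<lambda>(w,y). ins j w y) (Inj j (B - 1) \<times> {1..B}) (Inj (Suc j) B)"
  apply (rule bij_betw_byWitness[where f'="\<lambda>w. (del j w, w (Suc j))"])
  using del_ins ins_del ins_in del_in by (auto simp: ins_def)




lemma des_ins:
  assumes w: "w \<in> Inj j (B - 1)" and y: "y \<in> {1..B}"
  shows "des (Suc j) (ins j w y) = des j w + (if 1 \<le> j \<and> y \<le> w j then 1 else 0)"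
proof -
  let ?W = "ins j w y"
  have mono: "?W a > ?W b \<longleftrightarrow> w a > w b" if "a \<in> {1..j}" "b \<in> {1..j}" for a b
    using that unfolding ins_def by auto
  have last: "?W j > ?W (Suc j) \<longleftrightarrow> y \<le> w j" if "1 \<le> j"
    using that unfolding ins_def by auto
  have S: "{i \<in> {1..<Suc j}. ?W i > ?W (Suc i)} =
      {i \<in> {1..<j}. w i > w (Suc i)} \<union> {i. i = j \<and> 1 \<le> j \<and> y \<le> w j}"
  proof (rule set_eqI)
    fix i
    show "i \<in> {i \<in> {1..<Suc j}. ?W i > ?W (Suc i)} \<longleftrightarrow>
      i \<in> {i \<in> {1..<j}. w i > w (Suc i)} \<union> {i. i = j \<and> 1 \<le> j \<and> y \<le> w j}"
    proof (cases "i < j")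
      case True
      then show ?thesis using mono[of i "Suc i"] by auto
    next
      case False
      then show ?thesis using last by (auto simp: less_Suc_eq)
    qed
  qed
  have "des (Suc j) ?W = card ({i \<in> {1..<j}. w i > w (Suc i)} \<union> {i. i = j \<and> 1 \<le> j \<and> y \<le> w j})"
    unfolding des_def S ..
  also have "\<dots> = card {i \<in> {1..<j}. w i > w (Suc i)} + card {i. i = j \<and> 1 \<le> j \<and> y \<le> w j}"
    by (rule card_Un_disjoint) auto
  also have "card {i. i = j \<and> 1 \<le> j \<and> y \<le> w j} = (if 1 \<le> j \<and> y \<le> w j then 1 else 0)" by auto
  finally show ?thesis unfolding des_def .
qed

lemma SI_Suc:
  "SI (Suc j) B \<phi> = SI j (B - 1) (\<lambda>v. \<Sum>y\<in>{1..B}. (if 1 \<le> j \<and> y \<le> v then [:0,1:] else 1) * \<phi> y)"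
proof -
  have "SI (Suc j) B \<phi> = (\<Sum>x\<in>Inj j (B - 1) \<times> {1..B}. (case x of (w,y) \<Rightarrow> [:0,1:] ^ des (Suc j) (ins j w y) * \<phi> (ins j w y (Suc j))))"
    unfolding SI_def by (subst sum.reindex_bij_betw[OF bij_ins, symmetric]) (simp add: case_prod_unfold)
  also have "\<dots> = (\<Sum>x\<in>Inj j (B - 1) \<times> {1..B}. (case x of (w,y) \<Rightarrow> [:0,1:] ^ des j w * ((if 1 \<le> j \<and> y \<le> w j then [:0,1:] else 1) * \<phi> y)))"
  proof (rule sum.cong[OF refl])
    fix x assume x: "x \<in> Inj j (B - 1) \<times> {1..B}"
    obtain w y where xy: "x = (w,y)" by (cases x)
    have w: "w \<in> Inj j (B - 1)" and y: "y \<in> {1..B}" using x xy by auto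
    have "ins j w y (Suc j) = y" unfolding ins_def by simp
    moreover have "[:0,1:] ^ des (Suc j) (ins j w y) = [:0,1:] ^ des j w * (if 1 \<le> j \<and> y \<le> w j then [:0,1:] else (1 :: int poly))"
      unfolding des_ins[OF w y] by (simp add: power_add)
    ultimately show "(case x of (w,y) \<Rightarrow> [:0,1:] ^ des (Suc j) (ins j w y) * \<phi> (ins j w y (Suc j))) =
      (case x of (w,y) \<Rightarrow> [:0,1:] ^ des j w * ((if 1 \<le> j \<and> y \<le> w j then [:0,1:] else 1) * \<phi> y))"
      unfolding xy by (simp add: mult.assoc)
  qed
  also have "\<dots> = (\<Sum>w\<in>Inj j (B - 1). \<Sum>y\<in>{1..B}. [:0,1:] ^ des j w * ((if 1 \<le> j \<and> y \<le> w j then [:0,1:] else 1) * \<phi> y))"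
    by (simp add: sum.cartesian_product)
  also have "\<dots> = SI j (B - 1) (\<lambda>v. \<Sum>y\<in>{1..B}. (if 1 \<le> j \<and> y \<le> v then [:0,1:] else 1) * \<phi> y)"
    unfolding SI_def by (simp add: sum_distrib_left)
  finally show ?thesis .
qed

lemma Inj_0: "Inj 0 B = {id}"
  unfolding Inj_def by (auto simp: fun_eq_iff)

lemma SI_0: "SI 0 B \<phi> = \<phi> 0"
  unfolding SI_def Inj_0 by (simp add: des_def)

lemma SI_cong:
  assumes "1 \<le> j" "\<And>v. v \<in> {1..B} \<Longrightarrow> f v = g v"
  shows "SI j B f = SI j B g"
  unfolding SI_def
proof (rule sum.cong[OF refl])
  fix w assume "w \<in> Inj j B"
  then have "w j \<in> {1..B}" using assms(1) unfolding Inj_def by auto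
  then show "[:0,1:] ^ des j w * f (w j) = [:0,1:] ^ des j w * g (w j)" using assms(2) by simp
qed

lemma SB_SI:
  assumes "1 \<le> c" "1 \<le> j"
  shows "SB c j \<phi> = SI j (c + j - 1) (\<lambda>v. \<phi> (c + j - v))"
  using assms(2)
proof (induction j arbitrary: \<phi> rule: nat_induct_at_least)
  case base
  have "SI 1 (c + 1 - 1) (\<lambda>v. \<phi> (c + 1 - v)) = (\<Sum>y\<in>{1..c}. \<phi> (c + 1 - y))"
    using SI_Suc[of 0 c "\<lambda>v. \<phi> (c + 1 - v)"] by (simp add: SI_0)
  also have "\<dots> = (\<Sum>y\<in>{1..c}. \<phi> y)"
    using sum.atLeastAtMost_rev[of \<phi> 1 c] by simp
  finally show ?case using SB_1[of c \<phi>] by simp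
next
  case (Suc j)
  let ?psi = "\<lambda>v. \<Sum>z\<in>{1..c+j}. (if v < z then [:0,1:] else 1) * \<phi> z"
  have "SB c (Suc j) \<phi> = SB c j ?psi" using SB_Suc[OF Suc(1)] .
  also have "\<dots> = SI j (c + j - 1) (\<lambda>v. ?psi (c + j - v))" using Suc(2) .
  also have "\<dots> = SI j (c + j - 1) (\<lambda>v. \<Sum>y\<in>{1..c+j}. (if 1 \<le> j \<and> y \<le> v then [:0,1:] else 1) * \<phi> (c + Suc j - y))"
  proof (rule SI_cong[OF Suc(1)])
    fix v assume v: "v \<in> {1..c + j - 1}"
    have "?psi (c + j - v) = (\<Sum>i\<in>{1..c+j}. (if c + j - v < c + j + 1 - i then [:0,1:] else 1) * \<phi> (c + j + 1 - i))"
      using sum.atLeastAtMost_rev[of "\<lambda>z. (if c + j - v < z then [:0,1:] else 1) * \<phi> z" 1 "c+j"]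
      by (simp add: add.commute)
    also have "\<dots> = (\<Sum>y\<in>{1..c+j}. (if 1 \<le> j \<and> y \<le> v then [:0,1:] else 1) * \<phi> (c + Suc j - y))"
      using v Suc(1) by (intro sum.cong[OF refl]) auto
    finally show "?psi (c + j - v) = (\<Sum>y\<in>{1..c+j}. (if 1 \<le> j \<and> y \<le> v then [:0,1:] else 1) * \<phi> (c + Suc j - y))" .
  qed
  also have "\<dots> = SI (Suc j) (c + Suc j - 1) (\<lambda>v. \<phi> (c + Suc j - v))"
    using SI_Suc[of j "c + Suc j - 1" "\<lambda>v. \<phi> (c + Suc j - v)"] assms(1) by simp
  finally show ?case .
qed

lemma Ps_SI:
  assumes "1 \<le> c" "1 \<le> j"
  shows "Ps c j = (\<Sum>w\<in>Inj j (c + j - 1). [:0,1:] ^ des j w)"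
  using SB_SI[OF assms, of "\<lambda>_. 1"] unfolding SB_def SI_def Ps_def by simp




lemma eulerian_perm: "eulerian j = (\<Sum>\<sigma>\<in>{\<sigma>. \<sigma> permutes {1..j}}. [:0,1:] ^ des j \<sigma>)"
proof (cases "j = 0")
  case True
  have "{\<sigma>. \<sigma> permutes {1..j}} = {id}" using True by (simp add: permutes_empty)
  then show ?thesis using True by (simp add: eulerian_def des_def)
qed (simp add: eulerian_def)

lemma std_fiber:
  assumes S: "S \<subseteq> {1..B}" "card S = j"
  shows "(\<Sum>w\<in>{w \<in> Inj j B. w ` {1..j} = S}. [:0,1:] ^ des j w) = (\<Sum>\<sigma>\<in>{\<sigma>. \<sigma> permutes {1..j}}. [:0,1:] ^ des j \<sigma>)"
proof -
  have finS: "finite S" using S(1) finite_subset by blast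
  obtain h where hb: "bij_betw h {..<card S} S" and hm: "strict_mono_on {..<card S} h"
    using ex_bij_betw_strict_mono_card[OF finS] by blast
  define f where "f = (\<lambda>i. h (i - 1))"
  have sh: "bij_betw (\<lambda>i::nat. i - 1) {1..j} {..<j}"
    by (rule bij_betw_byWitness[where f'=Suc]) auto
  have fb: "bij_betw f {1..j} S"
  proof -
    have "bij_betw (h \<circ> (\<lambda>i::nat. i - 1)) {1..j} S" using bij_betw_trans[OF sh] hb S(2) by simp
    then show ?thesis by (simp add: f_def comp_def)
  qed
  have fm: "f a < f b \<longleftrightarrow> a < b" if "a \<in> {1..j}" "b \<in> {1..j}" for a b
  proof -
    have "h (a - 1) < h (b - 1) \<longleftrightarrow> a - 1 < b - 1"
      by (rule strict_mono_on_less[OF hm]) (use that S(2) in auto)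
    then show ?thesis using that by (auto simp: f_def)
  qed
  define g where "g = inv_into {1..j} f"
  have finj: "inj_on f {1..j}" and fimg: "f ` {1..j} = S" using fb by (auto simp: bij_betw_def)
  have gf: "g (f a) = a" if "a \<in> {1..j}" for a using that finj by (simp add: g_def inv_into_f_f)
  have fg: "f (g s) = s" if "s \<in> S" for s using that fimg by (auto simp: g_def f_inv_into_f)
  define \<Phi> where "\<Phi> \<sigma> = (\<lambda>i. if i \<in> {1..j} then f (\<sigma> i) else i)" for \<sigma> :: "nat \<Rightarrow> nat"
  define \<Psi> where "\<Psi> w = (\<lambda>i. if i \<in> {1..j} then g (w i) else i)" for w :: "nat \<Rightarrow> nat"
  have bij: "bij_betw \<Phi> {\<sigma>. \<sigma> permutes {1..j}} {w \<in> Inj j B. w ` {1..j} = S}"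
  proof (rule bij_betw_byWitness[where f'=\<Psi>])
    show "\<forall>\<sigma>\<in>{\<sigma>. \<sigma> permutes {1..j}}. \<Psi> (\<Phi> \<sigma>) = \<sigma>"
    proof
      fix \<sigma> assume "\<sigma> \<in> {\<sigma>. \<sigma> permutes {1..j}}"
      then have p: "\<sigma> permutes {1..j}" by simp
      show "\<Psi> (\<Phi> \<sigma>) = \<sigma>"
      proof
        fix i show "\<Psi> (\<Phi> \<sigma>) i = \<sigma> i"
          using gf[of "\<sigma> i"] permutes_in_image[OF p, of i] permutes_not_in[OF p, of i]
          unfolding \<Psi>_def \<Phi>_def by auto
      qed
    qed
    show "\<forall>w\<in>{w \<in> Inj j B. w ` {1..j} = S}. \<Phi> (\<Psi> w) = w"
    proof
      fix w assume w: "w \<in> {w \<in> Inj j B. w ` {1..j} = S}"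
      then have wo: "\<And>i. i \<notin> {1..j} \<Longrightarrow> w i = i" and wS: "\<And>i. i \<in> {1..j} \<Longrightarrow> w i \<in> S"
        unfolding Inj_def by auto
      show "\<Phi> (\<Psi> w) = w"
      proof
        fix i show "\<Phi> (\<Psi> w) i = w i"
          using fg[OF wS[of i]] wo[of i] unfolding \<Psi>_def \<Phi>_def by auto
      qed
    qed
    show "\<Phi> ` {\<sigma>. \<sigma> permutes {1..j}} \<subseteq> {w \<in> Inj j B. w ` {1..j} = S}"
    proof
      fix w assume "w \<in> \<Phi> ` {\<sigma>. \<sigma> permutes {1..j}}"
      then obtain \<sigma> where p: "\<sigma> permutes {1..j}" and w: "w = \<Phi> \<sigma>" by auto
      have si: "\<sigma> i \<in> {1..j}" if "i \<in> {1..j}" for i using permutes_in_image[OF p] that by simp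
      have simg: "\<sigma> ` {1..j} = {1..j}" using permutes_image[OF p] .
      have sinj: "inj_on \<sigma> {1..j}" using permutes_inj_on[OF p] .
      have img: "w ` {1..j} = S"
      proof -
        have "w ` {1..j} = (\<lambda>i. f (\<sigma> i)) ` {1..j}" unfolding w \<Phi>_def by (rule image_cong) auto
        also have "\<dots> = f ` (\<sigma> ` {1..j})" by (simp add: image_image)
        finally have "w ` {1..j} = f ` (\<sigma> ` {1..j})" .
        then show ?thesis using simg fimg by simp
      qed
      have vals: "\<forall>i\<in>{1..j}. w i \<in> {1..B}" using img S(1) by auto
      have inj: "inj_on w {1..j}"
      proof (rule inj_onI)
        fix a b assume a: "a \<in> {1..j}" and b: "b \<in> {1..j}" and e: "w a = w b"
        then have "f (\<sigma> a) = f (\<sigma> b)" unfolding w \<Phi>_def by simp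
        then have "\<sigma> a = \<sigma> b" using finj si[OF a] si[OF b] by (auto dest: inj_onD)
        then show "a = b" using sinj a b by (auto dest: inj_onD)
      qed
      have out: "\<forall>i. i \<notin> {1..j} \<longrightarrow> w i = i" unfolding w \<Phi>_def by simp
      show "w \<in> {w \<in> Inj j B. w ` {1..j} = S}" unfolding Inj_def using vals inj out img by blast
    qed
    show "\<Psi> ` {w \<in> Inj j B. w ` {1..j} = S} \<subseteq> {\<sigma>. \<sigma> permutes {1..j}}"
    proof
      fix \<sigma> assume "\<sigma> \<in> \<Psi> ` {w \<in> Inj j B. w ` {1..j} = S}"
      then obtain w where w: "w \<in> Inj j B" "w ` {1..j} = S" and s: "\<sigma> = \<Psi> w" by auto
      have winj: "inj_on w {1..j}" using w(1) unfolding Inj_def by auto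
      have gb: "bij_betw g S {1..j}" unfolding g_def by (rule bij_betw_inv_into[OF fb])
      have "bij_betw \<sigma> {1..j} {1..j}"
      proof -
        have e: "\<And>i. i \<in> {1..j} \<Longrightarrow> \<sigma> i = g (w i)" unfolding s \<Psi>_def by simp
        have "bij_betw (g \<circ> w) {1..j} {1..j}"
        proof (rule bij_betw_trans[where B=S])
          show "bij_betw w {1..j} S" using winj w(2) by (simp add: bij_betw_def)
          show "bij_betw g S {1..j}" by (rule gb)
        qed
        moreover have "bij_betw \<sigma> {1..j} {1..j} = bij_betw (g \<circ> w) {1..j} {1..j}"
          by (rule bij_betw_cong) (simp add: e)
        ultimately show ?thesis by simp
      qed
      moreover have "\<And>i. i \<notin> {1..j} \<Longrightarrow> \<sigma> i = i" unfolding s \<Psi>_def by auto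
      ultimately have "\<sigma> permutes {1..j}" by (rule bij_imp_permutes)
      then show "\<sigma> \<in> {\<sigma>. \<sigma> permutes {1..j}}" by simp
    qed
  qed
  have des_eq: "des j (\<Phi> \<sigma>) = des j \<sigma>" if "\<sigma> \<in> {\<sigma>. \<sigma> permutes {1..j}}" for \<sigma>
  proof -
    have p: "\<sigma> permutes {1..j}" using that by simp
    have si: "\<sigma> i \<in> {1..j}" if "i \<in> {1..j}" for i using permutes_in_image[OF p] that by simp
    have "{i \<in> {1..<j}. \<Phi> \<sigma> i > \<Phi> \<sigma> (Suc i)} = {i \<in> {1..<j}. \<sigma> i > \<sigma> (Suc i)}"
    proof (rule Collect_cong)
      fix i
      show "(i \<in> {1..<j} \<and> \<Phi> \<sigma> i > \<Phi> \<sigma> (Suc i)) = (i \<in> {1..<j} \<and> \<sigma> i > \<sigma> (Suc i))"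
      proof (cases "i \<in> {1..<j}")
        case True
        then have "i \<in> {1..j}" "Suc i \<in> {1..j}" by auto
        then show ?thesis using fm[OF si[of "Suc i"] si[of i]] True unfolding \<Phi>_def by simp
      qed auto
    qed
    then show ?thesis unfolding des_def by simp
  qed
  have "(\<Sum>w\<in>{w \<in> Inj j B. w ` {1..j} = S}. [:0,1:] ^ des j w) =
      (\<Sum>\<sigma>\<in>{\<sigma>. \<sigma> permutes {1..j}}. [:0,1:] ^ des j (\<Phi> \<sigma>))"
    by (rule sum.reindex_bij_betw[OF bij, symmetric])
  also have "\<dots> = (\<Sum>\<sigma>\<in>{\<sigma>. \<sigma> permutes {1..j}}. [:0,1:] ^ des j \<sigma>)"
    by (rule sum.cong[OF refl]) (simp add: des_eq)
  finally show ?thesis .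
qed

lemma Inj_des_sum: "(\<Sum>w\<in>Inj j B. [:0,1:] ^ des j w) = of_nat (B choose j) * eulerian j"
proof -
  let ?T = "{S. S \<subseteq> {1..B} \<and> card S = j}"
  have finT: "finite ?T" by (rule finite_subset[of _ "Pow {1..B}"]) auto
  have sub: "(\<lambda>w. w ` {1..j}) ` Inj j B \<subseteq> ?T"
  proof
    fix S assume "S \<in> (\<lambda>w. w ` {1..j}) ` Inj j B"
    then obtain w where w: "w \<in> Inj j B" and S: "S = w ` {1..j}" by auto
    have "S \<subseteq> {1..B}" using w S unfolding Inj_def by auto
    moreover have "card S = j" using w S unfolding Inj_def by (simp add: card_image)
    ultimately show "S \<in> ?T" by simp
  qed
  have "(\<Sum>w\<in>Inj j B. [:0,1:] ^ des j w) =
      (\<Sum>S\<in>?T. \<Sum>w\<in>{w \<in> Inj j B. w ` {1..j} = S}. [:0,1:] ^ des j w)"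
    by (rule sum.group[OF finite_Inj finT sub, symmetric])
  also have "\<dots> = (\<Sum>S\<in>?T. eulerian j)"
  proof (rule sum.cong[OF refl])
    fix S assume "S \<in> ?T"
    then show "(\<Sum>w\<in>{w \<in> Inj j B. w ` {1..j} = S}. [:0,1:] ^ des j w) = eulerian j"
      using std_fiber[of S B j] eulerian_perm[of j] by simp
  qed
  also have "\<dots> = of_nat (card ?T) * eulerian j" by simp
  also have "card ?T = B choose j" using n_subsets[of "{1..B}" j] by simp
  finally show ?thesis .
qed

lemma Ps_closed:
  assumes "1 \<le> c"
  shows "Ps c j = of_nat (c + j - 1 choose j) * eulerian j"
proof (cases "j = 0")
  case True
  then show ?thesis by (simp add: Ps_def PosSeq_0 eulerian_def)
next
  case False
  then show ?thesis using Ps_SI[OF assms, of j] Inj_des_sum by simp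
qed




lemma Ekn_Zs:
  assumes "q \<le> n"
  shows "Ekn q n = Zs (n + 1 - q) q"
proof -
  consider "q = 0" | "q = 1" | "q \<ge> 2" by linarith
  then show ?thesis
  proof cases
    case 1 then show ?thesis by (simp add: Ekn_def Zs_0)
  next
    case 2
    have "Seq (n + 1 - q) 0 = {[]}" unfolding Seq_def by auto
    then show ?thesis using 2 by (simp add: Ekn_def Zs_Suc Fs_def pw_def)
  next
    case 3
    define c where "c = n + 1 - q"
    have l: "[n - q + 2 ..< n + 1] = [c+1..<c+(q-1)+1]" using 3 assms unfolding c_def
      by (metis Nat.add_diff_assoc2 Suc_1 add.commute add_Suc_right diff_Suc_1 le_add_diff_inverse2 nat_le_linear not_less_eq_eq plus_1_eq_Suc add_diff_cancel_left' Suc_diff_le le_SucI)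
    have "Ekn q n = Etilde [c+1..<c+(q-1)+1]" using 3 l by (simp add: Ekn_def)
    also have "\<dots> = Fs c (q - 1)" unfolding Etilde_consec Fs_def ..
    also have "\<dots> = Zs c q" using 3 Zs_Suc[of c "q-1"] by simp
    finally show ?thesis unfolding c_def .
  qed
qed

theorem lemmaB1:
  fixes k n :: nat
  assumes "1 \<le> k" and "k \<le> n"
  shows "Ekn k n = Ekn (k - 1) (n - 1)
           + [:0, 1:] * (\<Sum>j = 0..k - 1. of_nat (n - 1 choose j) * eulerian j * Ekn (k - 1 - j) (n - 1 - j))"
proof -
  define m where "m = k - 1"
  define c where "c = n + 1 - k"
  have k: "k = Suc m" using assms(1) m_def by simp
  have c1: "1 \<le> c" using assms(2) c_def by simp
  have cm: "c + m - 1 = n - 1" using assms c_def m_def by simp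
  have E1: "Ekn k n = Zs c (Suc m)" using Ekn_Zs[OF assms(2)] k c_def by simp
  have E2: "Ekn (k - 1) (n - 1) = Zs c m"
    using Ekn_Zs[of "k-1" "n-1"] assms c_def m_def by simp
  have E3: "Ekn (k - 1 - j) (n - 1 - j) = Zs c (m - j)" if "j \<le> m" for j
  proof -
    have "Ekn (k - 1 - j) (n - 1 - j) = Zs (n - 1 - j + 1 - (k - 1 - j)) (k - 1 - j)"
      using Ekn_Zs[of "k-1-j" "n-1-j"] assms that m_def by simp
    also have "n - 1 - j + 1 - (k - 1 - j) = c" using assms that m_def c_def by simp
    finally show ?thesis using m_def by simp
  qed
  have P: "Ps (c + q) (m - q) = of_nat (n - 1 choose (m - q)) * eulerian (m - q)" if "q \<le> m" for q
    using Ps_closed[of "c+q" "m-q"] c1 that cm by simp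
  have "(\<Sum>q\<in>{..m}. Zs c q * Ps (c+q) (m-q)) = (\<Sum>q\<in>{0..m}. Zs c q * (of_nat (n - 1 choose (m - q)) * eulerian (m - q)))"
    using P by (simp add: atMost_atLeast0)
  also have "\<dots> = (\<Sum>i\<in>{0..m}. Zs c (m + 0 - i) * (of_nat (n - 1 choose (m - (m + 0 - i))) * eulerian (m - (m + 0 - i))))"
    by (rule sum.atLeastAtMost_rev)
  also have "\<dots> = (\<Sum>j\<in>{0..m}. Zs c (m - j) * (of_nat (n - 1 choose j) * eulerian j))"
    by (rule sum.cong[OF refl]) auto
  also have "\<dots> = (\<Sum>j = 0..k - 1. of_nat (n - 1 choose j) * eulerian j * Ekn (k - 1 - j) (n - 1 - j))"
    unfolding m_def[symmetric]
  proof (rule sum.cong[OF refl])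
    fix j assume "j \<in> {0..m}"
    then have e: "Ekn (k - 1 - j) (n - 1 - j) = Zs c (m - j)" using E3 by simp
    show "Zs c (m - j) * (of_nat (n - 1 choose j) * eulerian j) =
      of_nat (n - 1 choose j) * eulerian j * Ekn (m - j) (n - 1 - j)"
      using e m_def by (simp add: mult.commute)
  qed
  finally have S: "(\<Sum>q\<in>{..m}. Zs c q * Ps (c+q) (m-q)) =
      (\<Sum>j = 0..k - 1. of_nat (n - 1 choose j) * eulerian j * Ekn (k - 1 - j) (n - 1 - j))" .
  show ?thesis unfolding E1 E2 Zs_rec S ..
qed


end
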